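(* Let $T\ge1$ and $N\ge 1$ be integers, and let $\psi_j$, $\eta$, $q_0$ be as in the context. Then $$q_0(1)=\frac{1}{K},\qquad\text{where}\qquad \frac1K=2^{\frac{N-2}{2}}\prod_{j=1}^{\frac{N-2}{2}}(1-\cos\psi_j)\ \text{ ($N$ even)},\qquad \frac1K=2^{\frac{N-3}{2}}\prod_{j=1}^{\frac{N-1}{2}}(1-\cos\psi_j)\ \text{ ($N$ odd)},$$ and the normalized polynomial $q(z)=K\,q_0(z)$ (which satisfies $q(1)=1$) satisfies $q(-1)=P_N$, where $$P_N=\frac{T}{2+(N-1)T}\prod_{j=1}^{\frac{N-2}{2}}\cot^2\frac{\psi_j}{2}\ \text{ ($N$ even)},\qquad P_N=\prod_{j=1}^{\frac{N-1}{2}}\cot^2\frac{\psi_j}{2}\ \text{ ($N$ odd)}.$$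
   Context: Fix integers $T\ge 1$, $N\ge1$. Set $\psi_j=\dfrac{\pi(2+T(2j-1))}{2+(N-1)T}$. Define the polynomial $\eta$ by $\eta(z)=z(z+1)\prod_{j=1}^{\frac{N-2}{2}}(z-e^{i\psi_j})(z-e^{-i\psi_j})$ if $N$ is even, and $\eta(z)=z\prod_{j=1}^{\frac{N-1}{2}}(z-e^{i\psi_j})(z-e^{-i\psi_j})$ if $N$ is odd (empty products equal $1$). Define $$q_0(z)=\frac{T}{2+(N-1)T}\left(\Bigl(\frac1T+N\Bigr)\frac{\eta(z)}{z}-\eta'(z)\right),$$ a polynomial of degree at most $N-1$. *)

theory Defs
  imports "HOL-Analysis.Analysis" "HOL-Computational_Algebra.Polynomial"
begin

definition psi :: "nat \<Rightarrow> nat \<Rightarrow> nat \<Rightarrow> real" where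
  "psi T N j = pi * (2 + real T * (2 * real j - 1)) / (2 + (real N - 1) * real T)"

definition eta :: "nat \<Rightarrow> nat \<Rightarrow> complex poly" where
  "eta T N =
    (if even N then
       [:0, 1:] * [:1, 1:] *
       (\<Prod>j\<in>{1..(N - 2) div 2}.
          [:- cis (psi T N j), 1:] * [:- cis (- psi T N j), 1:])
     else
       [:0, 1:] *
       (\<Prod>j\<in>{1..(N - 1) div 2}.
          [:- cis (psi T N j), 1:] * [:- cis (- psi T N j), 1:]))"

text \<open>eta is divisible by z, so eta div z is the exact quotient eta(z)/z.\<close>
definition q0 :: "nat \<Rightarrow> nat \<Rightarrow> complex poly" where
  "q0 T N = smult (complex_of_real (real T / (2 + (real N - 1) * real T)))
     (smult (complex_of_real (1 / real T + real N)) (eta T N div [:0, 1:]) - pderiv (eta T N))"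

definition invK :: "nat \<Rightarrow> nat \<Rightarrow> real" where
  "invK T N =
    (if even N then 2 powr ((real N - 2) / 2) * (\<Prod>j\<in>{1..(N - 2) div 2}. 1 - cos (psi T N j))
     else 2 powr ((real N - 3) / 2) * (\<Prod>j\<in>{1..(N - 1) div 2}. 1 - cos (psi T N j)))"

definition P_N :: "nat \<Rightarrow> nat \<Rightarrow> real" where
  "P_N T N =
    (if even N then real T / (2 + (real N - 1) * real T) * (\<Prod>j\<in>{1..(N - 2) div 2}. (cot (psi T N j / 2))\<^sup>2)
     else (\<Prod>j\<in>{1..(N - 1) div 2}. (cot (psi T N j / 2))\<^sup>2))"

end

theory Submission
  imports Defs
begin
lemma factor_eq: "[:- cis a, 1:] * [:- cis (- a), 1:] = [:1, - 2 * complex_of_real (cos a), 1:]"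
  by (simp add: cis_mult complex_eq_iff)

lemma prod_pderiv_gen:
  fixes f :: "nat \<Rightarrow> complex poly"
  assumes "finite A" "\<And>j. j\<in>A \<Longrightarrow> poly (pderiv (f j)) x = c * poly (f j) x"
  shows "poly (pderiv (prod f A)) x = of_nat (card A) * c * poly (prod f A) x"
  using assms
proof (induction A rule: finite_induct)
  case empty then show ?case by simp
next
  case (insert a F)
  then show ?case by (simp add: pderiv_mult algebra_simps)
qed

definition SS :: "nat \<Rightarrow> nat \<Rightarrow> nat \<Rightarrow> complex poly" where
  "SS T N M = (\<Prod>j\<in>{1..M}. [:1, - 2 * complex_of_real (cos (psi T N j)), 1:])"

lemma SS_eq: "(\<Prod>j\<in>{1..M}. [:- cis (psi T N j), 1:] * [:- cis (- psi T N j), 1:]) = SS T N M"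
  unfolding SS_def by (simp only: factor_eq)

lemma SS_1: "poly (SS T N M) 1 = complex_of_real (\<Prod>j\<in>{1..M}. 2 - 2 * cos (psi T N j))"
  unfolding SS_def by (simp add: poly_prod)

lemma SS_m1: "poly (SS T N M) (-1) = complex_of_real (\<Prod>j\<in>{1..M}. 2 + 2 * cos (psi T N j))"
  unfolding SS_def by (simp add: poly_prod)

lemma SS_d1: "poly (pderiv (SS T N M)) 1 = of_nat M * poly (SS T N M) 1"
  unfolding SS_def
  by (subst prod_pderiv_gen[where c=1]) (auto simp: pderiv_pCons)

lemma SS_dm1: "poly (pderiv (SS T N M)) (-1) = - of_nat M * poly (SS T N M) (-1)"
  unfolding SS_def
  by (subst prod_pderiv_gen[where c="-1"]) (auto simp: pderiv_pCons)

lemma psi_bounds: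
  assumes "T \<ge> 1" "j \<ge> 1" "2 * j < N"
  shows "0 < psi T N j" "psi T N j < pi"
proof -
  have "real N \<ge> 1" using assms by simp
  hence D: "2 + (real N - 1) * real T > 0" by (intro add_pos_nonneg) auto
  have "real T * (2 * real j - 1) < (real N - 1) * real T"
  proof -
    have "2 * real j - 1 < real N - 1" using assms by linarith
    thus ?thesis using assms by (simp add: mult.commute)
  qed
  hence "2 + real T * (2 * real j - 1) < 2 + (real N - 1) * real T" by linarith
  thus "psi T N j < pi" unfolding psi_def using D by (simp add: divide_less_eq)
  have "2 * real j - 1 \<ge> 0" using assms by simp
  hence "2 + real T * (2 * real j - 1) > 0" by (intro add_pos_nonneg) auto
  thus "0 < psi T N j" unfolding psi_def using D by simp
qed

lemma cos_facts:
  assumes "0 < x" "x < pi"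
  shows "1 - cos x > 0" "(cot (x/2))^2 = (1 + cos x) / (1 - cos x)"
proof -
  have s: "sin (x/2) > 0" using assms by (intro sin_gt_zero) auto
  have c1: "1 - cos x = 2 * (sin (x/2))^2" using cos_double_sin[of "x/2"] by simp
  have c2: "1 + cos x = 2 * (cos (x/2))^2" using cos_double_cos[of "x/2"] by simp
  show "1 - cos x > 0" using c1 s by simp
  show "(cot (x/2))^2 = (1 + cos x) / (1 - cos x)"
    using s by (simp add: c1 c2 cot_def power_divide)
qed
lemma q0_poly:
  "poly (q0 T N) x = complex_of_real (real T / (2 + (real N - 1) * real T)) *
     (complex_of_real (1 / real T + real N) * poly (eta T N div [:0, 1:]) x - poly (pderiv (eta T N)) x)"
  unfolding q0_def by simp

lemma odd_case:
  assumes "T \<ge> 1" "odd N"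
  defines "M \<equiv> (N - 1) div 2"
  defines "A1 \<equiv> (\<Prod>j\<in>{1..M}. 2 - 2 * cos (psi T N j))"
  defines "B1 \<equiv> (\<Prod>j\<in>{1..M}. 2 + 2 * cos (psi T N j))"
  shows "poly (q0 T N) 1 = complex_of_real (A1 / 2)" "poly (q0 T N) (-1) = complex_of_real (B1 / 2)"
proof -
  have e: "eta T N = [:0,1:] * SS T N M" unfolding eta_def M_def SS_eq using assms(2) by simp
  have d: "eta T N div [:0,1:] = SS T N M" unfolding e by (rule nonzero_mult_div_cancel_left) simp
  have p: "pderiv (eta T N) = [:0,1:] * pderiv (SS T N M) + SS T N M" unfolding e
    by (simp add: pderiv_mult pderiv_pCons)
  have "N = 2 * M + 1" unfolding M_def using assms(2) by presburger
  hence N: "real N = 2 * real M + 1" by simp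
  have D: "2 + (real N - 1) * real T > 0" using N by (intro add_pos_nonneg) auto
  have Tp: "real T > 0" using assms(1) by simp
  have D2: "2 + real M * (real T * 2) \<noteq> 0" using D N by simp
  have D3: "real T * 2 + real M * (real T * (real T * 2)) \<noteq> 0"
  proof -
    have "real T * 2 + real M * (real T * (real T * 2)) = real T * (2 + real M * (real T * 2))" by (simp add: algebra_simps)
    thus ?thesis using Tp D2 by simp
  qed
  have r1: "real T / (2 + (real N - 1) * real T) * ((1 / real T + real N) * A1 - (real M * A1 + A1)) = A1 / 2"
    using D3 Tp D2 N by (simp add: field_simps)
  have r2: "real T / (2 + (real N - 1) * real T) * ((1 / real T + real N) * B1 - (real M * B1 + B1)) = B1 / 2"
    using D3 Tp D2 N by (simp add: field_simps)
  have "poly (q0 T N) 1 = complex_of_real (real T / (2 + (real N - 1) * real T) * ((1 / real T + real N) * A1 - (real M * A1 + A1)))"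
    unfolding q0_poly d p poly_add poly_mult SS_d1 SS_1 A1_def[symmetric] by simp
  thus "poly (q0 T N) 1 = complex_of_real (A1 / 2)" by (simp only: r1)
  have "poly (q0 T N) (-1) = complex_of_real (real T / (2 + (real N - 1) * real T) * ((1 / real T + real N) * B1 - (real M * B1 + B1)))"
    unfolding q0_poly d p poly_add poly_mult SS_dm1 SS_m1 B1_def[symmetric] by simp
  thus "poly (q0 T N) (-1) = complex_of_real (B1 / 2)" by (simp only: r2)
qed
lemma even_case:
  assumes "T \<ge> 1" "even N" "N \<ge> 1"
  defines "M \<equiv> (N - 2) div 2"
  defines "A1 \<equiv> (\<Prod>j\<in>{1..M}. 2 - 2 * cos (psi T N j))"
  defines "B1 \<equiv> (\<Prod>j\<in>{1..M}. 2 + 2 * cos (psi T N j))"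
  shows "poly (q0 T N) 1 = complex_of_real A1"
    "poly (q0 T N) (-1) = complex_of_real (real T / (2 + (real N - 1) * real T) * B1)"
proof -
  define R where "R = [:1,1:] * SS T N M"
  have e: "eta T N = [:0,1:] * R" unfolding eta_def M_def SS_eq R_def using assms(2) by (simp add: mult.assoc)
  have d: "eta T N div [:0,1:] = R" unfolding e by (rule nonzero_mult_div_cancel_left) simp
  have p: "pderiv (eta T N) = [:0,1:] * pderiv R + R" unfolding e
    by (simp add: pderiv_mult pderiv_pCons)
  have pR: "pderiv R = [:1,1:] * pderiv (SS T N M) + SS T N M" unfolding R_def pderiv_mult
    by (simp add: pderiv_pCons)
  have R1: "poly R 1 = 2 * poly (SS T N M) 1" unfolding R_def by simp
  have Rm1: "poly R (-1) = 0" unfolding R_def by simp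
  have "N = 2 * M + 2" unfolding M_def using assms(2,3) by presburger
  hence N: "real N = 2 * real M + 2" by simp
  have Tp: "real T > 0" using assms(1) by simp
  have D: "2 + (real N - 1) * real T > 0" using N by (intro add_pos_nonneg) auto
  have r1: "real T / (2 + (real N - 1) * real T) * ((1 / real T + real N) * (2 * A1) - (2 * real M * A1 + A1 + 2 * A1)) = A1"
  proof -
    have "(1 / real T + real N) * (2 * A1) - (2 * real M * A1 + A1 + 2 * A1) = (2 + (real N - 1) * real T) / real T * A1"
      using Tp N by (simp add: field_simps)
    thus ?thesis using Tp D by simp
  qed
  have "poly (q0 T N) 1 = complex_of_real (real T / (2 + (real N - 1) * real T) * ((1 / real T + real N) * (2 * A1) - (2 * real M * A1 + A1 + 2 * A1)))"
    unfolding q0_poly d p pR poly_add poly_mult SS_d1 SS_1 R1 SS_1 A1_def[symmetric] by simp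
  thus "poly (q0 T N) 1 = complex_of_real A1" by (simp only: r1)
  show "poly (q0 T N) (-1) = complex_of_real (real T / (2 + (real N - 1) * real T) * B1)"
    unfolding q0_poly d p pR poly_add poly_mult SS_dm1 SS_m1 Rm1 B1_def[symmetric] by simp
qed
lemma prod_facts:
  assumes "T \<ge> 1" "2 * M < N"
  shows "(\<Prod>j\<in>{1..M}. 2 - 2 * cos (psi T N j)) = 2 ^ M * (\<Prod>j\<in>{1..M}. 1 - cos (psi T N j))"
    "(\<Prod>j\<in>{1..M}. 2 + 2 * cos (psi T N j)) = 2 ^ M * (\<Prod>j\<in>{1..M}. 1 + cos (psi T N j))"
    "(\<Prod>j\<in>{1..M}. 1 - cos (psi T N j)) > 0"
    "(\<Prod>j\<in>{1..M}. (cot (psi T N j / 2))\<^sup>2) = (\<Prod>j\<in>{1..M}. 1 + cos (psi T N j)) / (\<Prod>j\<in>{1..M}. 1 - cos (psi T N j))"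
proof -
  have b: "0 < psi T N j \<and> psi T N j < pi" if "j \<in> {1..M}" for j
    using psi_bounds[of T j N] that assms by auto
  have "(\<Prod>j\<in>{1..M}. 2 - 2 * cos (psi T N j)) = (\<Prod>j\<in>{1..M}. 2 * (1 - cos (psi T N j)))" by simp
  also have "\<dots> = 2 ^ M * (\<Prod>j\<in>{1..M}. 1 - cos (psi T N j))" unfolding prod.distrib by simp
  finally show "(\<Prod>j\<in>{1..M}. 2 - 2 * cos (psi T N j)) = 2 ^ M * (\<Prod>j\<in>{1..M}. 1 - cos (psi T N j))" .
  have "(\<Prod>j\<in>{1..M}. 2 + 2 * cos (psi T N j)) = (\<Prod>j\<in>{1..M}. 2 * (1 + cos (psi T N j)))" by simp
  also have "\<dots> = 2 ^ M * (\<Prod>j\<in>{1..M}. 1 + cos (psi T N j))" unfolding prod.distrib by simp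
  finally show "(\<Prod>j\<in>{1..M}. 2 + 2 * cos (psi T N j)) = 2 ^ M * (\<Prod>j\<in>{1..M}. 1 + cos (psi T N j))" .
  show "(\<Prod>j\<in>{1..M}. 1 - cos (psi T N j)) > 0"
    by (rule prod_pos) (use b cos_facts(1) in blast)
  have "(\<Prod>j\<in>{1..M}. (cot (psi T N j / 2))\<^sup>2) = (\<Prod>j\<in>{1..M}. (1 + cos (psi T N j)) / (1 - cos (psi T N j)))"
    by (rule prod.cong) (use b cos_facts(2) in auto)
  also have "\<dots> = (\<Prod>j\<in>{1..M}. 1 + cos (psi T N j)) / (\<Prod>j\<in>{1..M}. 1 - cos (psi T N j))"
    by (rule prod_dividef)
  finally show "(\<Prod>j\<in>{1..M}. (cot (psi T N j / 2))\<^sup>2) = (\<Prod>j\<in>{1..M}. 1 + cos (psi T N j)) / (\<Prod>j\<in>{1..M}. 1 - cos (psi T N j))" .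
qed
theorem mainTheorem3:
  fixes T N :: nat
  assumes "T \<ge> 1" and "N \<ge> 1"
  shows "poly (q0 T N) 1 = complex_of_real (invK T N)
    \<and> poly (smult (complex_of_real (1 / invK T N)) (q0 T N)) 1 = 1
    \<and> poly (smult (complex_of_real (1 / invK T N)) (q0 T N)) (-1) = complex_of_real (P_N T N)"
proof (cases "even N")
  case True
  define M where "M = (N - 2) div 2"
  have NM: "N = 2 * M + 2" unfolding M_def using True assms(2) by presburger
  have NM': "(N - 2) div 2 = M" using M_def by simp
  define P where "P = (\<Prod>j\<in>{1..M}. 1 - cos (psi T N j))"
  define Q where "Q = (\<Prod>j\<in>{1..M}. 1 + cos (psi T N j))"
  have lt: "2 * M < N" using NM by simp
  note pf = prod_facts[OF assms(1) lt, folded P_def Q_def]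
  note ec = even_case[OF assms(1) True assms(2), unfolded NM' pf(1,2)]
  have pw: "2 powr ((real N - 2) / 2) = 2 ^ M"
  proof -
    have "(real N - 2) / 2 = real M" using NM by simp
    thus ?thesis by (simp add: powr_realpow)
  qed
  have iK: "invK T N = 2 ^ M * P" unfolding invK_def using True by (simp add: NM' pw P_def)
  have PN: "P_N T N = real T / (2 + (real N - 1) * real T) * (Q / P)" unfolding P_N_def NM' pf(4) using True by simp
  have Pp: "P > 0" using pf(3) .
  show ?thesis
    using ec Pp unfolding iK PN
    by (simp add: field_simps)
next
  case False
  define M where "M = (N - 1) div 2"
  have NM: "N = 2 * M + 1" unfolding M_def using False by presburger
  have NM': "(N - 1) div 2 = M" using M_def by simp
  define P where "P = (\<Prod>j\<in>{1..M}. 1 - cos (psi T N j))"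
  define Q where "Q = (\<Prod>j\<in>{1..M}. 1 + cos (psi T N j))"
  have lt: "2 * M < N" using NM by simp
  note pf = prod_facts[OF assms(1) lt, folded P_def Q_def]
  note oc = odd_case[OF assms(1) False, unfolded NM' pf(1,2)]
  have pw: "2 powr ((real N - 3) / 2) = 2 ^ M / 2"
  proof -
    have e: "(real N - 3) / 2 = real M - 1" using NM by simp
    have "2 powr (real M - 1) = 2 powr real M / 2 powr 1" by (rule powr_diff)
    thus ?thesis unfolding e by (simp add: powr_realpow)
  qed
  have iK: "invK T N = 2 ^ M / 2 * P" unfolding invK_def NM' P_def[symmetric] using False by (simp add: pw)
  have PN: "P_N T N = Q / P" unfolding P_N_def NM' pf(4) using False by simp
  have Pp: "P > 0" using pf(3) .
  show ?thesis
    using oc Pp unfolding iK PN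
    by (simp add: field_simps)
qed
end
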